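(* Let $a,b\in\mathbb{R}$, $a<b$, and let $f(t,x,u,z,s)$, $g(t,x,u,z,s)$ be real functions with continuous partial derivatives with respect to $x,u,z,s$. Let $(\tilde{x},\tilde{u})$ be a normal extremizer of $$L[x,u]=\int_a^b f\big(t,x(t),u(t),x(a),x(b)\big)\,dt$$ subject to $x'(t)=g\big(t,x(t),u(t),x(a),x(b)\big)$, where the endpoint condition $x(a)=x_a$ may or may not be imposed and the condition $x(b)=x_b$ may or may not be imposed. Let $H(t,x,u,p,z,s)=f(t,x,u,z,s)+p\,g(t,x,u,z,s)$. Then there exists a function $\tilde{p}$ such that, with all partial derivatives of $H$ evaluated at $\big(t,\tilde{x}(t),\tilde{u}(t),\tilde{p}(t),\tilde{x}(a),\tilde{x}(b)\big)$, for all $t\in[a,b]$: $$\tilde{x}'(t)=H_p,\qquad \tilde{p}'(t)=-H_x,\qquad H_u=0;$$ moreover, $\tilde{p}(a)=-\int_a^b H_z\,dt$ if $x(a)$ is free, and $\tilde{p}(b)=\int_a^b H_s\,dt$ if $x(b)$ is free.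
   Context: An extremizer is a local minimizer or maximizer. It is normal if the Lagrange multiplier rule holds with multiplier $1$ on $f$, i.e. $(\tilde{x},\tilde{u})$ is an extremizer of $\int_a^b\{f+\lambda(g-x')\}dt$ for some multiplier function $\lambda$ (as opposed to the abnormal case where $f$ gets coefficient $0$). $H_x,H_u,H_p,H_z,H_s$ denote partial derivatives of $H$ with respect to its 2nd–6th arguments. *)

theory Defs
  imports "HOL-Analysis.Analysis"
begin

type_synonym fn5 = "real \<Rightarrow> real \<Rightarrow> real \<Rightarrow> real \<Rightarrow> real \<Rightarrow> real"

definition pd_x :: "fn5 \<Rightarrow> fn5" where
  "pd_x f t x u z s = deriv (\<lambda>y. f t y u z s) x"
definition pd_u :: "fn5 \<Rightarrow> fn5" where
  "pd_u f t x u z s = deriv (\<lambda>y. f t x y z s) u"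
definition pd_z :: "fn5 \<Rightarrow> fn5" where
  "pd_z f t x u z s = deriv (\<lambda>y. f t x u y s) z"
definition pd_s :: "fn5 \<Rightarrow> fn5" where
  "pd_s f t x u z s = deriv (\<lambda>y. f t x u z y) s"

definition smooth_data :: "real \<Rightarrow> real \<Rightarrow> fn5 \<Rightarrow> bool" where
  "smooth_data a b f \<longleftrightarrow>
     (\<forall>t\<in>{a..b}. \<forall>x u z s.
        (\<lambda>y. f t y u z s) differentiable (at x) \<and>
        (\<lambda>y. f t x y z s) differentiable (at u) \<and>
        (\<lambda>y. f t x u y s) differentiable (at z) \<and>
        (\<lambda>y. f t x u z y) differentiable (at s)) \<and>
     continuous_on ({a..b} \<times> UNIV) (\<lambda>(t,x,u,z,s). f t x u z s) \<and>
     continuous_on ({a..b} \<times> UNIV) (\<lambda>(t,x,u,z,s). pd_x f t x u z s) \<and>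
     continuous_on ({a..b} \<times> UNIV) (\<lambda>(t,x,u,z,s). pd_u f t x u z s) \<and>
     continuous_on ({a..b} \<times> UNIV) (\<lambda>(t,x,u,z,s). pd_z f t x u z s) \<and>
     continuous_on ({a..b} \<times> UNIV) (\<lambda>(t,x,u,z,s). pd_s f t x u z s)"

definition dx :: "real \<Rightarrow> real \<Rightarrow> (real \<Rightarrow> real) \<Rightarrow> real \<Rightarrow> real" where
  "dx a b x t = vector_derivative x (at t within {a..b})"

definition C1_on :: "real \<Rightarrow> real \<Rightarrow> (real \<Rightarrow> real) \<Rightarrow> bool" where
  "C1_on a b x \<longleftrightarrow> (\<exists>x'. (\<forall>t\<in>{a..b}. (x has_real_derivative x' t) (at t within {a..b}))
                         \<and> continuous_on {a..b} x')"

definition admissible ::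
  "real \<Rightarrow> real \<Rightarrow> bool \<Rightarrow> real \<Rightarrow> bool \<Rightarrow> real \<Rightarrow> (real \<Rightarrow> real) \<Rightarrow> (real \<Rightarrow> real) \<Rightarrow> bool" where
  "admissible a b fixA xa fixB xb x u \<longleftrightarrow>
     C1_on a b x \<and> continuous_on {a..b} u \<and>
     (fixA \<longrightarrow> x a = xa) \<and> (fixB \<longrightarrow> x b = xb)"

definition feasible ::
  "real \<Rightarrow> real \<Rightarrow> fn5 \<Rightarrow> bool \<Rightarrow> real \<Rightarrow> bool \<Rightarrow> real \<Rightarrow> (real \<Rightarrow> real) \<Rightarrow> (real \<Rightarrow> real) \<Rightarrow> bool" where
  "feasible a b g fixA xa fixB xb x u \<longleftrightarrow>
     admissible a b fixA xa fixB xb x u \<and>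
     (\<forall>t\<in>{a..b}. dx a b x t = g t (x t) (u t) (x a) (x b))"

definition near :: "real \<Rightarrow> real \<Rightarrow> real \<Rightarrow> (real \<Rightarrow> real) \<Rightarrow> (real \<Rightarrow> real)
                     \<Rightarrow> (real \<Rightarrow> real) \<Rightarrow> (real \<Rightarrow> real) \<Rightarrow> bool" where
  "near a b e x u x0 u0 \<longleftrightarrow>
     (\<forall>t\<in>{a..b}. \<bar>x t - x0 t\<bar> < e \<and> \<bar>dx a b x t - dx a b x0 t\<bar> < e \<and> \<bar>u t - u0 t\<bar> < e)"

definition local_min where
  "local_min a b P J x0 u0 \<longleftrightarrow> P x0 u0 \<and>
     (\<exists>e>0. \<forall>x u. P x u \<and> near a b e x u x0 u0 \<longrightarrow> J x0 u0 \<le> J x u)"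
definition local_max where
  "local_max a b P J x0 u0 \<longleftrightarrow> P x0 u0 \<and>
     (\<exists>e>0. \<forall>x u. P x u \<and> near a b e x u x0 u0 \<longrightarrow> J x u \<le> J x0 u0)"
definition extremizer where
  "extremizer a b P J x0 u0 \<longleftrightarrow> local_min a b P J x0 u0 \<or> local_max a b P J x0 u0"

definition Lfun :: "real \<Rightarrow> real \<Rightarrow> fn5 \<Rightarrow> (real \<Rightarrow> real) \<Rightarrow> (real \<Rightarrow> real) \<Rightarrow> real" where
  "Lfun a b f x u = integral {a..b} (\<lambda>t. f t (x t) (u t) (x a) (x b))"

definition Laug :: "real \<Rightarrow> real \<Rightarrow> fn5 \<Rightarrow> fn5 \<Rightarrow> (real \<Rightarrow> real)
                     \<Rightarrow> (real \<Rightarrow> real) \<Rightarrow> (real \<Rightarrow> real) \<Rightarrow> real" where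
  "Laug a b f g lam x u = integral {a..b}
     (\<lambda>t. f t (x t) (u t) (x a) (x b) + lam t * (g t (x t) (u t) (x a) (x b) - dx a b x t))"

definition normal_extremizer where
  "normal_extremizer a b f g fixA xa fixB xb x0 u0 \<longleftrightarrow>
     extremizer a b (feasible a b g fixA xa fixB xb) (Lfun a b f) x0 u0 \<and>
     (\<exists>lam. continuous_on {a..b} lam \<and>
        extremizer a b (admissible a b fixA xa fixB xb) (Laug a b f g lam) x0 u0)"

definition Ham :: "fn5 \<Rightarrow> fn5 \<Rightarrow> real \<Rightarrow> real \<Rightarrow> real \<Rightarrow> real \<Rightarrow> real \<Rightarrow> real \<Rightarrow> real" where
  "Ham f g t x u p z s = f t x u z s + p * g t x u z s"

definition H_x where "H_x f g t x u p z s = deriv (\<lambda>y. Ham f g t y u p z s) x"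
definition H_u where "H_u f g t x u p z s = deriv (\<lambda>y. Ham f g t x y p z s) u"
definition H_p where "H_p f g t x u p z s = deriv (\<lambda>y. Ham f g t x u y z s) p"
definition H_z where "H_z f g t x u p z s = deriv (\<lambda>y. Ham f g t x u p y s) z"
definition H_s where "H_s f g t x u p z s = deriv (\<lambda>y. Ham f g t x u p z y) s"

end

theory Submission
  imports Defs
begin


lemma partials2:
  fixes F :: "'a::real_normed_vector \<Rightarrow> real \<Rightarrow> real"
  assumes fw: "((\<lambda>w. F w y) has_derivative Fw) (at w)"
    and fy: "\<And>w y. ((\<lambda>y. F w y) has_real_derivative Dy w y) (at y)"
    and c: "continuous (at (w,y)) (\<lambda>(w,y). Dy w y)"
  shows "((\<lambda>(w,y). F w y) has_derivative (\<lambda>(hw,hy). Fw hw + Dy w y * hy)) (at (w,y))"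
proof -
  have c2: "continuous (at (w,y) within UNIV \<times> UNIV) (\<lambda>(w,y). blinfun_mult_right (Dy w y))"
  proof -
    have "continuous (at (w,y)) (\<lambda>p. blinfun_mult_right ((\<lambda>(w,y). Dy w y) p))"
      by (rule bounded_linear.continuous[OF bounded_linear_blinfun_mult_right c])
    then show ?thesis by (simp add: split_beta')
  qed
  have "((\<lambda>(w,y). F w y) has_derivative (\<lambda>(hw,hy). Fw hw + blinfun_mult_right (Dy w y) hy)) (at (w,y) within UNIV \<times> UNIV)"
    apply (rule has_derivative_partialsI[where fy="\<lambda>w y. blinfun_mult_right (Dy w y)"])
    using fw apply simp
    using fy apply (simp add: has_field_derivative_def)
    using c2 apply simp
    by auto
  then show ?thesis by simp
qed

lemma cont_comp_UNIV:
  "continuous_on UNIV P \<Longrightarrow> continuous_on UNIV k \<Longrightarrow> isCont (\<lambda>q. P (k q)) p"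
proof -
  assume P: "continuous_on UNIV P" and k: "continuous_on UNIV k"
  have "continuous_on UNIV (P \<circ> k)"
    by (rule continuous_on_compose[OF k continuous_on_subset[OF P subset_UNIV]])
  then show ?thesis
    by (simp add: continuous_on_eq_continuous_at o_def)
qed

lemma joint4:
  fixes \<phi> :: "real \<Rightarrow> real \<Rightarrow> real \<Rightarrow> real \<Rightarrow> real"
  assumes dx: "\<And>x u z s. ((\<lambda>y. \<phi> y u z s) has_real_derivative Px x u z s) (at x)"
    and du: "\<And>x u z s. ((\<lambda>y. \<phi> x y z s) has_real_derivative Pu x u z s) (at u)"
    and dz: "\<And>x u z s. ((\<lambda>y. \<phi> x u y s) has_real_derivative Pz x u z s) (at z)"
    and ds: "\<And>x u z s. ((\<lambda>y. \<phi> x u z y) has_real_derivative Ps x u z s) (at s)"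
    and cx: "continuous_on UNIV (\<lambda>(x,u,z,s). Px x u z s)"
    and cu: "continuous_on UNIV (\<lambda>(x,u,z,s). Pu x u z s)"
    and cs: "continuous_on UNIV (\<lambda>(x,u,z,s). Ps x u z s)"
    and that: "x' = x + e*hx" "u' = u + e*hu" "z' = z + e*hz" "s' = s + e*hs"
  shows "((\<lambda>e. \<phi> (x + e*hx) (u + e*hu) (z + e*hz) (s + e*hs)) has_real_derivative
     (Px x' u' z' s' * hx + Pu x' u' z' s' * hu + Pz x' u' z' s' * hz + Ps x' u' z' s' * hs)) (at e)"
proof -
  have A: "((\<lambda>(z,s). \<phi> x u z s) has_derivative (\<lambda>(hz,hs). Pz x u z s * hz + Ps x u z s * hs)) (at (z,s))" for x u z s
  proof -
    have "isCont (\<lambda>q. (\<lambda>(x,u,z,s). Ps x u z s) ((\<lambda>(z,s). (x,u,z,s)) q)) (z,s)"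
      by (rule cont_comp_UNIV[OF cs]) (auto intro!: continuous_intros simp: split_beta')
    then have c: "continuous (at (z,s)) (\<lambda>(z,s). Ps x u z s)" by (simp add: split_beta')
    have d1: "((\<lambda>w. \<phi> x u w s) has_derivative (\<lambda>h. Pz x u z s * h)) (at z)"
      using dz unfolding has_field_derivative_def by blast
    show ?thesis
      using partials2[of "\<lambda>z s. \<phi> x u z s", OF d1 ds c] by simp
  qed
  have B: "((\<lambda>(w,u). \<phi> x u (fst w) (snd w)) has_derivative (\<lambda>(hw,hu). Pz x u (fst w) (snd w) * fst hw + Ps x u (fst w) (snd w) * snd hw + Pu x u (fst w) (snd w) * hu)) (at (w,u))" for x u w
  proof -
    have "isCont (\<lambda>q. (\<lambda>(x,u,z,s). Pu x u z s) ((\<lambda>(w,u). (x,u,fst w,snd w)) q)) (w,u)"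
      by (rule cont_comp_UNIV[OF cu]) (auto intro!: continuous_intros simp: split_beta')
    then have c: "continuous (at (w,u)) (\<lambda>(w,u). Pu x u (fst w) (snd w))" by (simp add: split_beta')
    have a: "((\<lambda>w. \<phi> x u (fst w) (snd w)) has_derivative (\<lambda>hw. Pz x u (fst w) (snd w) * fst hw + Ps x u (fst w) (snd w) * snd hw)) (at w)"
      using A[of x u "fst w" "snd w"] by (simp add: split_beta')
    show ?thesis
      using partials2[of "\<lambda>w u. \<phi> x u (fst w) (snd w)", OF a du c]
      by (simp add: split_beta')
  qed
  have C: "((\<lambda>(v,x). \<phi> x (snd v) (fst (fst v)) (snd (fst v))) has_derivative
     (\<lambda>(hv,hx). Pz x (snd v) (fst (fst v)) (snd (fst v)) * fst (fst hv) + Ps x (snd v) (fst (fst v)) (snd (fst v)) * snd (fst hv) + Pu x (snd v) (fst (fst v)) (snd (fst v)) * snd hv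
        + Px x (snd v) (fst (fst v)) (snd (fst v)) * hx)) (at (v,x))" for v x
  proof -
    have "isCont (\<lambda>q. (\<lambda>(x,u,z,s). Px x u z s) ((\<lambda>(v,x). (x,snd v,fst (fst v),snd (fst v))) q)) (v,x)"
      by (rule cont_comp_UNIV[OF cx]) (auto intro!: continuous_intros simp: split_beta')
    then have c: "continuous (at (v,x)) (\<lambda>(v,x). Px x (snd v) (fst (fst v)) (snd (fst v)))" by (simp add: split_beta')
    have b: "((\<lambda>v. \<phi> x (snd v) (fst (fst v)) (snd (fst v))) has_derivative (\<lambda>hv. Pz x (snd v) (fst (fst v)) (snd (fst v)) * fst (fst hv) + Ps x (snd v) (fst (fst v)) (snd (fst v)) * snd (fst hv) + Pu x (snd v) (fst (fst v)) (snd (fst v)) * snd hv)) (at v)"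
      using B[of x "snd v" "fst v"] by (simp add: split_beta')
    show ?thesis
      using partials2[of "\<lambda>v x. \<phi> x (snd v) (fst (fst v)) (snd (fst v))", OF b dx c]
      by (simp add: split_beta')
  qed
  define path where "path = (\<lambda>e::real. (((z + e*hz, s + e*hs), u + e*hu), x + e*hx))"
  have P: "(path has_derivative (\<lambda>h. (((h*hz, h*hs), h*hu), h*hx))) (at e)"
    unfolding path_def
    by (auto intro!: derivative_eq_intros simp: algebra_simps)
  have pe: "path e = (((z + e*hz, s + e*hs), u + e*hu), x + e*hx)" by (simp add: path_def)
  have C': "((\<lambda>(v,x). \<phi> x (snd v) (fst (fst v)) (snd (fst v))) has_derivative
     (\<lambda>(hv,hx). Pz x' u' z' s' * fst (fst hv) + Ps x' u' z' s' * snd (fst hv) + Pu x' u' z' s' * snd hv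
        + Px x' u' z' s' * hx)) (at (path e))"
    using C[of "x+e*hx" "((z + e*hz, s + e*hs), u + e*hu)"] unfolding pe that(1-4) fst_conv snd_conv .
  have D: "((\<lambda>(v,x). \<phi> x (snd v) (fst (fst v)) (snd (fst v))) \<circ> path has_derivative
     (\<lambda>(hv,hx). Pz x' u' z' s' * fst (fst hv) + Ps x' u' z' s' * snd (fst hv) + Pu x' u' z' s' * snd hv
        + Px x' u' z' s' * hx) \<circ> (\<lambda>h. (((h*hz, h*hs), h*hu), h*hx))) (at e)"
    by (rule diff_chain_at[OF P C'])
  have eq1: "(\<lambda>(v,x). \<phi> x (snd v) (fst (fst v)) (snd (fst v))) \<circ> path = (\<lambda>e. \<phi> (x + e*hx) (u + e*hu) (z + e*hz) (s + e*hs))"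
    by (simp add: path_def fun_eq_iff)
  have eq2: "(\<lambda>(hv,hx). Pz x' u' z' s' * fst (fst hv) + Ps x' u' z' s' * snd (fst hv) + Pu x' u' z' s' * snd hv
        + Px x' u' z' s' * hx) \<circ> (\<lambda>h. (((h*hz, h*hs), h*hu), h*hx)) = (*) (Px x' u' z' s' * hx + Pu x' u' z' s' * hu + Pz x' u' z' s' * hz + Ps x' u' z' s' * hs)"
    by (simp add: fun_eq_iff algebra_simps)
  show ?thesis
    unfolding has_field_derivative_def using D unfolding eq1 eq2 .
qed



lemma smooth_path:
  assumes sd: "smooth_data a b f" and t: "t \<in> {a..b}"
  shows "((\<lambda>e. f t (x + e*hx) (u + e*hu) (z + e*hz) (s + e*hs)) has_real_derivative
     (pd_x f t (x + e*hx) (u + e*hu) (z + e*hz) (s + e*hs) * hx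
    + pd_u f t (x + e*hx) (u + e*hu) (z + e*hz) (s + e*hs) * hu
    + pd_z f t (x + e*hx) (u + e*hu) (z + e*hz) (s + e*hs) * hz
    + pd_s f t (x + e*hx) (u + e*hu) (z + e*hz) (s + e*hs) * hs)) (at e)"
proof -
  have cf: "continuous_on UNIV (\<lambda>(x,u,z,s). P t x u z s)"
    if c: "continuous_on ({a..b} \<times> UNIV) (\<lambda>(t,x,u,z,s). P t x u z s)" for P
  proof -
    have "continuous_on UNIV (\<lambda>q. (\<lambda>(t,x,u,z,s). P t x u z s) (t, q))"
      by (rule continuous_on_compose2[OF c]) (use t in \<open>auto intro!: continuous_intros\<close>)
    then show ?thesis by (simp add: split_beta')
  qed
  from sd have d: "\<forall>x u z s.
        (\<lambda>y. f t y u z s) differentiable (at x) \<and>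
        (\<lambda>y. f t x y z s) differentiable (at u) \<and>
        (\<lambda>y. f t x u y s) differentiable (at z) \<and>
        (\<lambda>y. f t x u z y) differentiable (at s)" using t unfolding smooth_data_def by blast
  show ?thesis
    apply (rule joint4[where Px="pd_x f t" and Pu="pd_u f t" and Pz="pd_z f t" and Ps="pd_s f t"])
    subgoal using d unfolding pd_x_def by (simp add: DERIV_deriv_iff_real_differentiable)
    subgoal using d unfolding pd_u_def by (simp add: DERIV_deriv_iff_real_differentiable)
    subgoal using d unfolding pd_z_def by (simp add: DERIV_deriv_iff_real_differentiable)
    subgoal using d unfolding pd_s_def by (simp add: DERIV_deriv_iff_real_differentiable)
    subgoal using sd unfolding smooth_data_def by (intro cf) blast
    subgoal using sd unfolding smooth_data_def by (intro cf) blast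
    subgoal using sd unfolding smooth_data_def by (intro cf) blast
    by auto
qed

lemma comp5:
  assumes c: "continuous_on ({a..b} \<times> UNIV) (\<lambda>(t,x,u,z,s). P t x u z s)"
    and "continuous_on S T" "continuous_on S A" "continuous_on S B" "continuous_on S C" "continuous_on S D"
    and "T ` S \<subseteq> {a..b}"
  shows "continuous_on S (\<lambda>q. P (T q) (A q) (B q) (C q) (D q))"
proof -
  have "continuous_on S (\<lambda>q. (\<lambda>(t,x,u,z,s). P t x u z s) (T q, A q, B q, C q, D q))"
    by (rule continuous_on_compose2[OF c]) (use assms in \<open>auto intro!: continuous_intros\<close>)
  then show ?thesis by simp
qed

lemma cont_snd: "continuous_on {a..b} h \<Longrightarrow> continuous_on (UNIV \<times> {a..b}) (\<lambda>q. h (snd q))"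
  by (rule continuous_on_compose2[of "{a..b}"]) (auto intro!: continuous_intros)

lemma dx_eq:
  assumes "a < b" "t \<in> {a..b}" "(h has_real_derivative h') (at t within {a..b})"
  shows "dx a b h t = h'"
  using vector_derivative_within_cbox[of a b t h h'] assms
  unfolding dx_def has_real_derivative_iff_has_vector_derivative by (simp add: cbox_interval)

lemma deriv_cont:
  assumes "\<forall>t\<in>{a..b}. (h has_real_derivative h' t) (at t within {a..b})"
  shows "continuous_on {a..b} h"
  using assms DERIV_continuous continuous_on_eq_continuous_within by blast



lemma var_deriv:
  fixes X X' U eta eta' nu lam :: "real \<Rightarrow> real"
  assumes ab: "a < b" and sf: "smooth_data a b f" and sg: "smooth_data a b g"
    and lamc: "continuous_on {a..b} lam"
    and Xd: "\<forall>t\<in>{a..b}. (X has_real_derivative X' t) (at t within {a..b})"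
    and X'c: "continuous_on {a..b} X'"
    and Uc: "continuous_on {a..b} U"
    and ed: "\<forall>t\<in>{a..b}. (eta has_real_derivative eta' t) (at t within {a..b})"
    and e'c: "continuous_on {a..b} eta'"
    and nuc: "continuous_on {a..b} nu"
  shows "((\<lambda>e. Laug a b f g lam (\<lambda>t. X t + e*eta t) (\<lambda>t. U t + e*nu t)) has_real_derivative
   integral {a..b} (\<lambda>t. (pd_x f t (X t) (U t) (X a) (X b) + lam t * pd_x g t (X t) (U t) (X a) (X b)) * eta t
     + (pd_u f t (X t) (U t) (X a) (X b) + lam t * pd_u g t (X t) (U t) (X a) (X b)) * nu t
     + (pd_z f t (X t) (U t) (X a) (X b) + lam t * pd_z g t (X t) (U t) (X a) (X b)) * eta a
     + (pd_s f t (X t) (U t) (X a) (X b) + lam t * pd_s g t (X t) (U t) (X a) (X b)) * eta b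
     - lam t * eta' t)) (at 0)"
proof -
  have Xc: "continuous_on {a..b} X" by (rule deriv_cont[OF Xd])
  have ec: "continuous_on {a..b} eta" by (rule deriv_cont[OF ed])
  define Phi where "Phi e t = f t (X t + e*eta t) (U t + e*nu t) (X a + e*eta a) (X b + e*eta b)
     + lam t * (g t (X t + e*eta t) (U t + e*nu t) (X a + e*eta a) (X b + e*eta b) - (X' t + e*eta' t))" for e t
  define Fd where "Fd h e t = pd_x h t (X t + e*eta t) (U t + e*nu t) (X a + e*eta a) (X b + e*eta b) * eta t
     + pd_u h t (X t + e*eta t) (U t + e*nu t) (X a + e*eta a) (X b + e*eta b) * nu t
     + pd_z h t (X t + e*eta t) (U t + e*nu t) (X a + e*eta a) (X b + e*eta b) * eta a
     + pd_s h t (X t + e*eta t) (U t + e*nu t) (X a + e*eta a) (X b + e*eta b) * eta b" for h e t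
  define Dv where "Dv e t = Fd f e t + lam t * (Fd g e t - eta' t)" for e t
  have hdx: "dx a b (\<lambda>t. X t + e*eta t) t = X' t + e*eta' t" if "t \<in> {a..b}" for e t
    by (rule dx_eq[OF ab that]) (use Xd[rule_format, OF that] ed[rule_format, OF that] in \<open>auto intro!: derivative_eq_intros\<close>)
  have L: "Laug a b f g lam (\<lambda>t. X t + e*eta t) (\<lambda>t. U t + e*nu t) = integral {a..b} (Phi e)" for e
    unfolding Laug_def Phi_def by (rule integral_cong) (simp add: hdx)
  have fc: "continuous_on ({a..b} \<times> UNIV) (\<lambda>(t,x,u,z,s). f t x u z s)"
    and gc: "continuous_on ({a..b} \<times> UNIV) (\<lambda>(t,x,u,z,s). g t x u z s)"
    using sf sg unfolding smooth_data_def by blast+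
  have cP: "continuous_on (UNIV \<times> {a..b}) (\<lambda>q. P (snd q) (X (snd q) + fst q * eta (snd q)) (U (snd q) + fst q * nu (snd q)) (X a + fst q * eta a) (X b + fst q * eta b))"
    if "continuous_on ({a..b} \<times> UNIV) (\<lambda>(t,x,u,z,s). P t x u z s)" for P
    by (rule comp5[OF that]) (auto intro!: continuous_intros cont_snd[OF Xc] cont_snd[OF ec] cont_snd[OF Uc] cont_snd[OF nuc])
  have cP1: "continuous_on {a..b} (\<lambda>t. P t (X t + e * eta t) (U t + e * nu t) (X a + e * eta a) (X b + e * eta b))"
    if "continuous_on ({a..b} \<times> UNIV) (\<lambda>(t,x,u,z,s). P t x u z s)" for P e
    by (rule comp5[OF that, where T="\<lambda>t. t"]) (auto intro!: continuous_intros Xc ec Uc nuc)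
  have dPhi: "((\<lambda>e. Phi e t) has_field_derivative Dv e t) (at e within UNIV)" if t: "t \<in> {a..b}" for e t
  proof -
    note df = smooth_path[OF sf t, where x="X t" and hx="eta t" and u="U t" and hu="nu t" and z="X a" and hz="eta a" and s="X b" and hs="eta b" and e=e]
    note dg = smooth_path[OF sg t, where x="X t" and hx="eta t" and u="U t" and hu="nu t" and z="X a" and hz="eta a" and s="X b" and hs="eta b" and e=e]
    show ?thesis
      unfolding Phi_def Dv_def Fd_def using df dg
      by (auto intro!: derivative_eq_intros simp: algebra_simps)
  qed
  have "((\<lambda>e. integral (cbox a b) (Phi e)) has_field_derivative integral (cbox a b) (Dv 0)) (at 0 within UNIV)"
  proof (rule leibniz_rule_field_derivative)
    show "((\<lambda>e. Phi e t) has_field_derivative Dv e t) (at e within UNIV)" if "e \<in> UNIV" "t \<in> cbox a b" for e t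
      using dPhi that by (simp add: cbox_interval)
    show "Phi e integrable_on cbox a b" if "e \<in> UNIV" for e
      unfolding cbox_interval
      by (rule integrable_continuous_interval)
         (unfold Phi_def, auto intro!: continuous_intros cP1[OF fc] cP1[OF gc] lamc X'c e'c)
    have sm: "continuous_on ({a..b} \<times> UNIV) (\<lambda>(t,x,u,z,s). pd_x h t x u z s)"
        "continuous_on ({a..b} \<times> UNIV) (\<lambda>(t,x,u,z,s). pd_u h t x u z s)"
        "continuous_on ({a..b} \<times> UNIV) (\<lambda>(t,x,u,z,s). pd_z h t x u z s)"
        "continuous_on ({a..b} \<times> UNIV) (\<lambda>(t,x,u,z,s). pd_s h t x u z s)"
      if "smooth_data a b h" for h using that unfolding smooth_data_def by blast+
    have "continuous_on (UNIV \<times> {a..b}) (\<lambda>q. Dv (fst q) (snd q))"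
      unfolding Dv_def Fd_def
      by (auto intro!: continuous_intros cP[OF sm(1)[OF sf]] cP[OF sm(2)[OF sf]] cP[OF sm(3)[OF sf]] cP[OF sm(4)[OF sf]] cP[OF sm(1)[OF sg]] cP[OF sm(2)[OF sg]] cP[OF sm(3)[OF sg]] cP[OF sm(4)[OF sg]] cont_snd[OF ec] cont_snd[OF lamc] cont_snd[OF nuc] cont_snd[OF e'c])
    then show "continuous_on (UNIV \<times> cbox a b) (\<lambda>(e, t). Dv e t)"
      by (simp add: cbox_interval split_beta')
  qed auto
  moreover have "Dv 0 = (\<lambda>t. (pd_x f t (X t) (U t) (X a) (X b) + lam t * pd_x g t (X t) (U t) (X a) (X b)) * eta t
     + (pd_u f t (X t) (U t) (X a) (X b) + lam t * pd_u g t (X t) (U t) (X a) (X b)) * nu t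
     + (pd_z f t (X t) (U t) (X a) (X b) + lam t * pd_z g t (X t) (U t) (X a) (X b)) * eta a
     + (pd_s f t (X t) (U t) (X a) (X b) + lam t * pd_s g t (X t) (U t) (X a) (X b)) * eta b
     - lam t * eta' t)"
    by (simp add: fun_eq_iff Dv_def Fd_def algebra_simps)
  ultimately show ?thesis
    unfolding L cbox_interval by simp
qed



lemma bound_on:
  fixes h :: "real \<Rightarrow> real"
  assumes "continuous_on {a..b} h"
  shows "\<exists>B>0. \<forall>t\<in>{a..b}. \<bar>h t\<bar> \<le> B"
proof -
  have "bounded (h ` {a..b})"
    by (rule compact_imp_bounded[OF compact_continuous_image[OF assms compact_Icc]])
  then show ?thesis unfolding bounded_pos by auto
qed

lemma small_prod:
  fixes y h M e :: real
  assumes "\<bar>y\<bar> < e / M" "\<bar>h\<bar> \<le> M" "M > 0"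
  shows "\<bar>y*h\<bar> < e"
proof -
  have "\<bar>y*h\<bar> = \<bar>y\<bar>*\<bar>h\<bar>" by (simp add: abs_mult)
  also have "\<dots> \<le> \<bar>y\<bar>*M" by (rule mult_left_mono) (use assms in auto)
  also have "\<dots> < e" using assms(1,3) by (simp add: pos_less_divide_eq)
  finally show ?thesis .
qed

lemma first_var_zero:
  fixes X X' U eta eta' nu lam :: "real \<Rightarrow> real"
  assumes ab: "a < b" and sf: "smooth_data a b f" and sg: "smooth_data a b g"
    and lamc: "continuous_on {a..b} lam"
    and Xd: "\<forall>t\<in>{a..b}. (X has_real_derivative X' t) (at t within {a..b})"
    and X'c: "continuous_on {a..b} X'"
    and ed: "\<forall>t\<in>{a..b}. (eta has_real_derivative eta' t) (at t within {a..b})"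
    and e'c: "continuous_on {a..b} eta'"
    and nuc: "continuous_on {a..b} nu"
    and ext: "extremizer a b (admissible a b fixA xa fixB xb) (Laug a b f g lam) X U"
    and fa: "fixA \<Longrightarrow> eta a = 0" and fb: "fixB \<Longrightarrow> eta b = 0"
  shows "integral {a..b} (\<lambda>t. (pd_x f t (X t) (U t) (X a) (X b) + lam t * pd_x g t (X t) (U t) (X a) (X b)) * eta t
     + (pd_u f t (X t) (U t) (X a) (X b) + lam t * pd_u g t (X t) (U t) (X a) (X b)) * nu t
     + (pd_z f t (X t) (U t) (X a) (X b) + lam t * pd_z g t (X t) (U t) (X a) (X b)) * eta a
     + (pd_s f t (X t) (U t) (X a) (X b) + lam t * pd_s g t (X t) (U t) (X a) (X b)) * eta b
     - lam t * eta' t) = 0" (is "?I = 0")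
proof -
  have adm0: "admissible a b fixA xa fixB xb X U"
    using ext unfolding extremizer_def local_min_def local_max_def by blast
  then have Uc: "continuous_on {a..b} U" unfolding admissible_def by blast
  define phi where "phi y = Laug a b f g lam (\<lambda>t. X t + y*eta t) (\<lambda>t. U t + y*nu t)" for y
  have D: "DERIV phi 0 :> ?I"
    unfolding phi_def by (rule var_deriv[OF ab sf sg lamc Xd X'c Uc ed e'c nuc])
  have phi0: "phi 0 = Laug a b f g lam X U" unfolding phi_def by simp
  obtain B1 where B1: "B1 > 0" "\<forall>t\<in>{a..b}. \<bar>eta t\<bar> \<le> B1" using bound_on[OF deriv_cont[OF ed]] by blast
  obtain B2 where B2: "B2 > 0" "\<forall>t\<in>{a..b}. \<bar>eta' t\<bar> \<le> B2" using bound_on[OF e'c] by blast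
  obtain B3 where B3: "B3 > 0" "\<forall>t\<in>{a..b}. \<bar>nu t\<bar> \<le> B3" using bound_on[OF nuc] by blast
  define M where "M = B1 + B2 + B3"
  have M: "M > 0" "\<forall>t\<in>{a..b}. \<bar>eta t\<bar> \<le> M \<and> \<bar>eta' t\<bar> \<le> M \<and> \<bar>nu t\<bar> \<le> M"
    using B1 B2 B3 unfolding M_def by force+
  have good: "admissible a b fixA xa fixB xb (\<lambda>t. X t + y*eta t) (\<lambda>t. U t + y*nu t) \<and>
      near a b e (\<lambda>t. X t + y*eta t) (\<lambda>t. U t + y*nu t) X U" if y: "\<bar>y\<bar> < e / M" for y e
  proof
    have dd: "\<forall>t\<in>{a..b}. ((\<lambda>t. X t + y*eta t) has_real_derivative X' t + y*eta' t) (at t within {a..b})"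
      using Xd ed by (auto intro!: derivative_eq_intros)
    have "C1_on a b (\<lambda>t. X t + y*eta t)"
      unfolding C1_on_def
      by (rule exI[where x="\<lambda>t. X' t + y*eta' t"]) (use dd in \<open>auto intro!: continuous_intros X'c e'c\<close>)
    then show "admissible a b fixA xa fixB xb (\<lambda>t. X t + y*eta t) (\<lambda>t. U t + y*nu t)"
      using adm0 fa fb unfolding admissible_def by (auto intro!: continuous_intros Uc nuc)
    show "near a b e (\<lambda>t. X t + y*eta t) (\<lambda>t. U t + y*nu t) X U"
      unfolding near_def
    proof
      fix t assume t: "t \<in> {a..b}"
      have "dx a b (\<lambda>t. X t + y*eta t) t = X' t + y*eta' t" by (rule dx_eq[OF ab t]) (use dd t in auto)
      moreover have "dx a b X t = X' t" by (rule dx_eq[OF ab t]) (use Xd t in auto)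
      ultimately show "\<bar>X t + y * eta t - X t\<bar> < e \<and> \<bar>dx a b (\<lambda>t. X t + y * eta t) t - dx a b X t\<bar> < e \<and> \<bar>U t + y * nu t - U t\<bar> < e"
        using small_prod[OF y _ M(1)] M(2) t by auto
    qed
  qed
  from ext show ?thesis
    unfolding extremizer_def
  proof
    assume "local_min a b (admissible a b fixA xa fixB xb) (Laug a b f g lam) X U"
    then obtain e where e: "e > 0" "\<forall>x u. admissible a b fixA xa fixB xb x u \<and> near a b e x u X U \<longrightarrow> Laug a b f g lam X U \<le> Laug a b f g lam x u"
      unfolding local_min_def by blast
    show ?thesis
    proof (rule DERIV_local_min[OF D])
      show "0 < e / M" using e M by simp
      show "\<forall>y. \<bar>0 - y\<bar> < e / M \<longrightarrow> phi 0 \<le> phi y"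
        using e(2) good unfolding phi0 by (auto simp: phi_def)
    qed
  next
    assume "local_max a b (admissible a b fixA xa fixB xb) (Laug a b f g lam) X U"
    then obtain e where e: "e > 0" "\<forall>x u. admissible a b fixA xa fixB xb x u \<and> near a b e x u X U \<longrightarrow> Laug a b f g lam x u \<le> Laug a b f g lam X U"
      unfolding local_max_def by blast
    show ?thesis
    proof (rule DERIV_local_max[OF D])
      show "0 < e / M" using e M by simp
      show "\<forall>y. \<bar>0 - y\<bar> < e / M \<longrightarrow> phi y \<le> phi 0"
        using e(2) good unfolding phi0 by (auto simp: phi_def)
    qed
  qed
qed



lemma H_eqs:
  assumes sf: "smooth_data a b f" and sg: "smooth_data a b g" and t: "t \<in> {a..b}"
  shows "H_x f g t x u p z s = pd_x f t x u z s + p * pd_x g t x u z s"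
    and "H_u f g t x u p z s = pd_u f t x u z s + p * pd_u g t x u z s"
    and "H_z f g t x u p z s = pd_z f t x u z s + p * pd_z g t x u z s"
    and "H_s f g t x u p z s = pd_s f t x u z s + p * pd_s g t x u z s"
    and "H_p f g t x u p z s = g t x u z s"
proof -
  have df: "(\<lambda>y. f t y u z s) differentiable (at x)" "(\<lambda>y. f t x y z s) differentiable (at u)"
     "(\<lambda>y. f t x u y s) differentiable (at z)" "(\<lambda>y. f t x u z y) differentiable (at s)"
    using sf t unfolding smooth_data_def by blast+
  have dg: "(\<lambda>y. g t y u z s) differentiable (at x)" "(\<lambda>y. g t x y z s) differentiable (at u)"
     "(\<lambda>y. g t x u y s) differentiable (at z)" "(\<lambda>y. g t x u z y) differentiable (at s)"
    using sg t unfolding smooth_data_def by blast+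
  show "H_x f g t x u p z s = pd_x f t x u z s + p * pd_x g t x u z s"
    unfolding H_x_def Ham_def pd_x_def
    by (rule DERIV_imp_deriv[OF DERIV_add[OF df(1)[unfolded DERIV_deriv_iff_real_differentiable[symmetric]] DERIV_cmult[OF dg(1)[unfolded DERIV_deriv_iff_real_differentiable[symmetric]]]]])
  show "H_u f g t x u p z s = pd_u f t x u z s + p * pd_u g t x u z s"
    unfolding H_u_def Ham_def pd_u_def
    by (rule DERIV_imp_deriv[OF DERIV_add[OF df(2)[unfolded DERIV_deriv_iff_real_differentiable[symmetric]] DERIV_cmult[OF dg(2)[unfolded DERIV_deriv_iff_real_differentiable[symmetric]]]]])
  show "H_z f g t x u p z s = pd_z f t x u z s + p * pd_z g t x u z s"
    unfolding H_z_def Ham_def pd_z_def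
    by (rule DERIV_imp_deriv[OF DERIV_add[OF df(3)[unfolded DERIV_deriv_iff_real_differentiable[symmetric]] DERIV_cmult[OF dg(3)[unfolded DERIV_deriv_iff_real_differentiable[symmetric]]]]])
  show "H_s f g t x u p z s = pd_s f t x u z s + p * pd_s g t x u z s"
    unfolding H_s_def Ham_def pd_s_def
    by (rule DERIV_imp_deriv[OF DERIV_add[OF df(4)[unfolded DERIV_deriv_iff_real_differentiable[symmetric]] DERIV_cmult[OF dg(4)[unfolded DERIV_deriv_iff_real_differentiable[symmetric]]]]])
  show "H_p f g t x u p z s = g t x u z s"
    unfolding H_p_def Ham_def
    by (rule DERIV_imp_deriv) (auto intro!: derivative_eq_intros)
qed

lemma contP:
  assumes "continuous_on ({a..b} \<times> UNIV) (\<lambda>(t,x,u,z,s). P t x u z s)"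
    and "continuous_on {a..b} X" "continuous_on {a..b} U"
  shows "continuous_on {a..b} (\<lambda>t. P t (X t) (U t) (X a) (X b))"
  by (rule comp5[OF assms(1), where T="\<lambda>t. t"]) (use assms in \<open>auto intro!: continuous_intros\<close>)

lemma zero_int_sq:
  fixes h :: "real \<Rightarrow> real"
  assumes ab: "a < b" and c: "continuous_on {a..b} h" and i: "((\<lambda>t. h t * h t) has_integral 0) {a..b}"
    and t: "t \<in> {a..b}"
  shows "h t = 0"
proof -
  have "(\<lambda>t. h t * h t) t = 0"
    by (rule has_integral_0_cbox_imp_0[of a b]) (use ab c i t in \<open>auto simp: cbox_interval intro!: continuous_intros\<close>)
  then show ?thesis by simp
qed



theorem mainTheorem4:
  fixes a b :: real and f g :: fn5 and fixA fixB :: bool and xa xb :: real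
    and xt ut :: "real \<Rightarrow> real"
  assumes "a < b"
    and "smooth_data a b f" and "smooth_data a b g"
    and "normal_extremizer a b f g fixA xa fixB xb xt ut"
  shows "\<exists>p :: real \<Rightarrow> real.
     (\<forall>t\<in>{a..b}.
        dx a b xt t = H_p f g t (xt t) (ut t) (p t) (xt a) (xt b) \<and>
        (p has_real_derivative (- H_x f g t (xt t) (ut t) (p t) (xt a) (xt b))) (at t within {a..b}) \<and>
        H_u f g t (xt t) (ut t) (p t) (xt a) (xt b) = 0) \<and>
     (\<not> fixA \<longrightarrow> p a = - integral {a..b} (\<lambda>t. H_z f g t (xt t) (ut t) (p t) (xt a) (xt b))) \<and>
     (\<not> fixB \<longrightarrow> p b = integral {a..b} (\<lambda>t. H_s f g t (xt t) (ut t) (p t) (xt a) (xt b)))"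
proof -
  note ab = assms(1) and sf = assms(2) and sg = assms(3)
  from assms(4) obtain lam where lamc: "continuous_on {a..b} lam"
    and ext: "extremizer a b (admissible a b fixA xa fixB xb) (Laug a b f g lam) xt ut"
    and ext0: "extremizer a b (feasible a b g fixA xa fixB xb) (Lfun a b f) xt ut"
    unfolding normal_extremizer_def by blast
  have feas: "feasible a b g fixA xa fixB xb xt ut"
    using ext0 unfolding extremizer_def local_min_def local_max_def by blast
  then have adm: "admissible a b fixA xa fixB xb xt ut" and dyn: "\<forall>t\<in>{a..b}. dx a b xt t = g t (xt t) (ut t) (xt a) (xt b)"
    unfolding feasible_def by blast+
  then obtain X' where Xd: "\<forall>t\<in>{a..b}. (xt has_real_derivative X' t) (at t within {a..b})"
    and X'c: "continuous_on {a..b} X'"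
    unfolding admissible_def C1_on_def by blast
  have Uc: "continuous_on {a..b} ut" using adm unfolding admissible_def by blast
  have Xc: "continuous_on {a..b} xt" by (rule deriv_cont[OF Xd])
  define Fx where "Fx t = pd_x f t (xt t) (ut t) (xt a) (xt b) + lam t * pd_x g t (xt t) (ut t) (xt a) (xt b)" for t
  define Fu where "Fu t = pd_u f t (xt t) (ut t) (xt a) (xt b) + lam t * pd_u g t (xt t) (ut t) (xt a) (xt b)" for t
  define Fz where "Fz t = pd_z f t (xt t) (ut t) (xt a) (xt b) + lam t * pd_z g t (xt t) (ut t) (xt a) (xt b)" for t
  define Fs where "Fs t = pd_s f t (xt t) (ut t) (xt a) (xt b) + lam t * pd_s g t (xt t) (ut t) (xt a) (xt b)" for t
  have sm: "continuous_on ({a..b} \<times> UNIV) (\<lambda>(t,x,u,z,s). pd_x h t x u z s)"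
        "continuous_on ({a..b} \<times> UNIV) (\<lambda>(t,x,u,z,s). pd_u h t x u z s)"
        "continuous_on ({a..b} \<times> UNIV) (\<lambda>(t,x,u,z,s). pd_z h t x u z s)"
        "continuous_on ({a..b} \<times> UNIV) (\<lambda>(t,x,u,z,s). pd_s h t x u z s)"
      if "smooth_data a b h" for h using that unfolding smooth_data_def by blast+
  have Fxc: "continuous_on {a..b} Fx" unfolding Fx_def
    by (intro continuous_intros contP[OF sm(1)[OF sf] Xc Uc] contP[OF sm(1)[OF sg] Xc Uc] lamc)
  have Fuc: "continuous_on {a..b} Fu" unfolding Fu_def
    by (intro continuous_intros contP[OF sm(2)[OF sf] Xc Uc] contP[OF sm(2)[OF sg] Xc Uc] lamc)
  have Fzc: "continuous_on {a..b} Fz" unfolding Fz_def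
    by (intro continuous_intros contP[OF sm(3)[OF sf] Xc Uc] contP[OF sm(3)[OF sg] Xc Uc] lamc)
  have Fsc: "continuous_on {a..b} Fs" unfolding Fs_def
    by (intro continuous_intros contP[OF sm(4)[OF sf] Xc Uc] contP[OF sm(4)[OF sg] Xc Uc] lamc)
  have FV: "integral {a..b} (\<lambda>t. Fx t * eta t + Fu t * nu t + Fz t * eta a + Fs t * eta b - lam t * eta' t) = 0"
    if "\<forall>t\<in>{a..b}. (eta has_real_derivative eta' t) (at t within {a..b})" "continuous_on {a..b} eta'"
       "continuous_on {a..b} nu" "fixA \<Longrightarrow> eta a = 0" "fixB \<Longrightarrow> eta b = 0" for eta eta' nu
    using first_var_zero[OF ab sf sg lamc Xd X'c that(1,2,3) ext that(4,5)]
    unfolding Fx_def Fu_def Fz_def Fs_def .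
  have FVi: "((\<lambda>t. Fx t * eta t + Fu t * nu t + Fz t * eta a + Fs t * eta b - lam t * eta' t) has_integral 0) {a..b}"
    if d: "\<forall>t\<in>{a..b}. (eta has_real_derivative eta' t) (at t within {a..b})" and "continuous_on {a..b} eta'"
       "continuous_on {a..b} nu" "fixA \<Longrightarrow> eta a = 0" "fixB \<Longrightarrow> eta b = 0" for eta eta' nu
  proof -
    have ec: "continuous_on {a..b} eta" by (rule deriv_cont[OF d])
    have "(\<lambda>t. Fx t * eta t + Fu t * nu t + Fz t * eta a + Fs t * eta b - lam t * eta' t) integrable_on {a..b}"
      by (rule integrable_continuous_interval) (use that ec Fxc Fuc Fzc Fsc lamc in \<open>auto intro!: continuous_intros\<close>)
    from integrable_integral[OF this] show ?thesis using FV[OF that] by simp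
  qed
  have Fu0: "Fu t = 0" if t: "t \<in> {a..b}" for t
  proof -
    have "((\<lambda>t. Fx t * 0 + Fu t * Fu t + Fz t * 0 + Fs t * 0 - lam t * 0) has_integral 0) {a..b}"
      using FVi[of "\<lambda>t. 0" "\<lambda>t. 0" Fu] Fuc by auto
    then have "((\<lambda>t. Fu t * Fu t) has_integral 0) {a..b}" by simp
    then show ?thesis by (rule zero_int_sq[OF ab Fuc _ t])
  qed
  \<comment> \<open>Step 2: du Bois-Reymond\<close>
  define A where "A t = integral {a..t} Fx" for t
  have Ad: "\<forall>t\<in>{a..b}. (A has_real_derivative Fx t) (at t within {a..b})"
    unfolding A_def using integral_has_real_derivative[OF Fxc] by blast
  have Ac: "continuous_on {a..b} A" by (rule deriv_cont[OF Ad])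
  define w where "w t = A t + lam t" for t
  have wc: "continuous_on {a..b} w" unfolding w_def by (intro continuous_intros Ac lamc)
  define C where "C = integral {a..b} w / (b - a)"
  define eta where "eta t = integral {a..t} (\<lambda>s. w s - C)" for t
  have wCc: "continuous_on {a..b} (\<lambda>s. w s - C)" by (intro continuous_intros wc)
  have ed: "\<forall>t\<in>{a..b}. (eta has_real_derivative w t - C) (at t within {a..b})"
    unfolding eta_def using integral_has_real_derivative[OF wCc] by blast
  have eta_a: "eta a = 0" unfolding eta_def by simp
  have wi: "w integrable_on {a..b}" by (rule integrable_continuous_interval[OF wc])
  have wCi: "((\<lambda>s. w s - C) has_integral 0) {a..b}"
  proof -
    have "((\<lambda>s. w s - C) has_integral (integral {a..b} w - (b - a) * C)) {a..b}"
      using has_integral_diff[OF integrable_integral[OF wi] has_integral_const_real[of C a b]] ab by simp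
    moreover have "integral {a..b} w - (b - a) * C = 0" unfolding C_def using ab by simp
    ultimately show ?thesis by simp
  qed
  have eta_b: "eta b = 0" unfolding eta_def using wCi by (simp add: integral_unique)
  have K1: "((\<lambda>t. Fx t * eta t + Fu t * 0 + Fz t * eta a + Fs t * eta b - lam t * (w t - C)) has_integral 0) {a..b}"
    by (rule FVi) (use ed wCc eta_a eta_b in auto)
  then have K1': "((\<lambda>t. Fx t * eta t - lam t * (w t - C)) has_integral 0) {a..b}"
    by (simp add: eta_a eta_b)
  have K2: "((\<lambda>t. Fx t * eta t + A t * (w t - C)) has_integral (A b * eta b - A a * eta a)) {a..b}"
  proof (rule fundamental_theorem_of_calculus[OF less_imp_le[OF ab]])
    fix t assume t: "t \<in> {a..b}"
    show "((\<lambda>t. A t * eta t) has_vector_derivative Fx t * eta t + A t * (w t - C)) (at t within {a..b})"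
      unfolding has_real_derivative_iff_has_vector_derivative[symmetric]
      using Ad[rule_format, OF t] ed[rule_format, OF t]
      by (auto intro!: derivative_eq_intros)
  qed
  then have K2': "((\<lambda>t. Fx t * eta t + A t * (w t - C)) has_integral 0) {a..b}"
    by (simp add: eta_a eta_b)
  have K3: "((\<lambda>t. (w t - C) * (w t - C)) has_integral 0) {a..b}"
  proof -
    have "((\<lambda>t. (Fx t * eta t + A t * (w t - C)) - (Fx t * eta t - lam t * (w t - C)) - C * (w t - C)) has_integral (0 - 0 - C * 0)) {a..b}"
      by (intro has_integral_diff K2' K1' has_integral_mult_right wCi)
    moreover have "(\<lambda>t. (Fx t * eta t + A t * (w t - C)) - (Fx t * eta t - lam t * (w t - C)) - C * (w t - C)) = (\<lambda>t. (w t - C) * (w t - C))"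
      by (simp add: fun_eq_iff w_def algebra_simps)
    ultimately show ?thesis by simp
  qed
  have wC: "w t - C = 0" if "t \<in> {a..b}" for t
    by (rule zero_int_sq[OF ab wCc K3 that])
  have ld: "\<forall>t\<in>{a..b}. (lam has_real_derivative - Fx t) (at t within {a..b})"
  proof
    fix t assume t: "t \<in> {a..b}"
    have "((\<lambda>t. C - A t) has_real_derivative - Fx t) (at t within {a..b})"
      using Ad[rule_format, OF t] by (auto intro!: derivative_eq_intros)
    then show "(lam has_real_derivative - Fx t) (at t within {a..b})"
      by (rule has_field_derivative_transform_within[OF _ zero_less_one t])
         (use wC in \<open>auto simp: w_def algebra_simps\<close>)
  qed
  have TI: "lam a * e a - lam b * e b + e a * integral {a..b} Fz + e b * integral {a..b} Fs = 0"
    if d: "\<forall>t\<in>{a..b}. (e has_real_derivative e' t) (at t within {a..b})" and e'c: "continuous_on {a..b} e'"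
       and "fixA \<Longrightarrow> e a = 0" "fixB \<Longrightarrow> e b = 0" for e e'
  proof -
    have J1: "((\<lambda>t. Fx t * e t + Fu t * 0 + Fz t * e a + Fs t * e b - lam t * e' t) has_integral 0) {a..b}"
      by (rule FVi) (use that in auto)
    have J2: "((\<lambda>t. - Fx t * e t + lam t * e' t) has_integral (lam b * e b - lam a * e a)) {a..b}"
    proof (rule fundamental_theorem_of_calculus[OF less_imp_le[OF ab]])
      fix t assume t: "t \<in> {a..b}"
      show "((\<lambda>t. lam t * e t) has_vector_derivative - Fx t * e t + lam t * e' t) (at t within {a..b})"
        unfolding has_real_derivative_iff_has_vector_derivative[symmetric]
        using ld[rule_format, OF t] d[rule_format, OF t]
        by (auto intro!: derivative_eq_intros)
    qed
    have J3: "((\<lambda>t. Fz t * e a + Fs t * e b - (- Fx t * e t + lam t * e' t)) has_integral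
        (integral {a..b} Fz * e a + integral {a..b} Fs * e b - (lam b * e b - lam a * e a))) {a..b}"
      by (intro has_integral_diff has_integral_add has_integral_mult_left J2
            integrable_integral integrable_continuous_interval Fzc Fsc)
    have "(\<lambda>t. Fz t * e a + Fs t * e b - (- Fx t * e t + lam t * e' t)) = (\<lambda>t. Fx t * e t + Fu t * 0 + Fz t * e a + Fs t * e b - lam t * e' t)"
      by (simp add: fun_eq_iff algebra_simps)
    with J3 have "((\<lambda>t. Fx t * e t + Fu t * 0 + Fz t * e a + Fs t * e b - lam t * e' t) has_integral
        (integral {a..b} Fz * e a + integral {a..b} Fs * e b - (lam b * e b - lam a * e a))) {a..b}" by simp
    from has_integral_unique[OF J1 this] show ?thesis by (simp add: algebra_simps)
  qed
  have TA: "lam a = - integral {a..b} Fz" if "\<not> fixA"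
  proof -
    have sq: "(b - a) * (b - a) > 0" using ab by simp
    have nz: "a * a + b * b - a * (b * 2) \<noteq> 0" "a * (b * 2) - (a * a + b * b) = - (a * a + b * b - a * (b * 2))"
      using sq by (simp_all add: algebra_simps)
    have "lam a * ((b - a)*(1/(b - a))) - lam b * ((b - b)*(1/(b - a))) + ((b - a)*(1/(b - a))) * integral {a..b} Fz + ((b - b)*(1/(b - a))) * integral {a..b} Fs = 0"
      by (rule TI[of "\<lambda>t. (b - t)*(1/(b - a))" "\<lambda>t. - 1/(b - a)"])
         (use that ab nz in \<open>auto intro!: derivative_eq_intros simp: field_simps\<close>)
    then show ?thesis using ab by simp
  qed
  have TB: "lam b = integral {a..b} Fs" if "\<not> fixB"
  proof -
    have sq: "(b - a) * (b - a) > 0" using ab by simp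
    have nz: "a * a + b * b - a * (b * 2) \<noteq> 0" "a * (b * 2) - (a * a + b * b) = - (a * a + b * b - a * (b * 2))"
      using sq by (simp_all add: algebra_simps)
    have "lam a * ((a - a)/(b - a)) - lam b * ((b - a)/(b - a)) + ((a - a)/(b - a)) * integral {a..b} Fz + ((b - a)/(b - a)) * integral {a..b} Fs = 0"
      by (rule TI[of "\<lambda>t. (t - a)/(b - a)" "\<lambda>t. 1/(b - a)"])
         (use that ab nz in \<open>auto intro!: derivative_eq_intros simp: field_simps\<close>)
    then show ?thesis using ab by simp
  qed
  have Hx: "H_x f g t (xt t) (ut t) (lam t) (xt a) (xt b) = Fx t"
   and Hu: "H_u f g t (xt t) (ut t) (lam t) (xt a) (xt b) = Fu t"
   and Hz: "H_z f g t (xt t) (ut t) (lam t) (xt a) (xt b) = Fz t"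
   and Hs: "H_s f g t (xt t) (ut t) (lam t) (xt a) (xt b) = Fs t"
   and Hp: "H_p f g t (xt t) (ut t) (lam t) (xt a) (xt b) = g t (xt t) (ut t) (xt a) (xt b)"
    if "t \<in> {a..b}" for t
    using H_eqs[OF sf sg that] unfolding Fx_def Fu_def Fz_def Fs_def by auto
  have IZ: "integral {a..b} (\<lambda>t. H_z f g t (xt t) (ut t) (lam t) (xt a) (xt b)) = integral {a..b} Fz"
    by (rule integral_cong) (simp add: Hz)
  have IS: "integral {a..b} (\<lambda>t. H_s f g t (xt t) (ut t) (lam t) (xt a) (xt b)) = integral {a..b} Fs"
    by (rule integral_cong) (simp add: Hs)
  show ?thesis
    apply (rule exI[where x=lam])
    using dyn ld Fu0 TA TB Hx Hu Hp IZ IS by auto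
qed

end
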